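(* Let $\phi$ be a flow of a compact metric space $X$. If $Sing(\phi)$ is dynamically isolated, then there is $\beta_0>0$ such that $diam(\phi_{\mathbb{R}}(x))\ge\beta_0$ for every $x\in X\setminus Sing(\phi)$.
   Context: A flow is a continuous $\phi:\mathbb{R}\times X\to X$ with $\phi_0=\mathrm{id}$, $\phi_{t+s}=\phi_t\circ\phi_s$; $\phi_{\mathbb{R}}(x)=\{\phi_t(x):t\in\mathbb{R}\}$; $Sing(\phi)$ is the set of fixed points. A compact invariant set $K$ is dynamically isolated if there is a neighborhood $U$ of $K$ with $K=\bigcap_{t\in\mathbb{R}}\phi_t(U)$. *)

theory Defs
  imports "HOL-Analysis.Analysis"
begin

definition is_flow :: "'a::metric_space set \<Rightarrow> (real \<Rightarrow> 'a \<Rightarrow> 'a) \<Rightarrow> bool" where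
  "is_flow X phi \<longleftrightarrow>
     continuous_on (UNIV \<times> X) (\<lambda>(t, x). phi t x) \<and>
     (\<forall>t. \<forall>x\<in>X. phi t x \<in> X) \<and>
     (\<forall>x\<in>X. phi 0 x = x) \<and>
     (\<forall>t s. \<forall>x\<in>X. phi (t + s) x = phi t (phi s x))"

definition orbit :: "(real \<Rightarrow> 'a \<Rightarrow> 'a) \<Rightarrow> 'a \<Rightarrow> 'a set" where
  "orbit phi x = {phi t x | t. True}"

definition Sing :: "'a set \<Rightarrow> (real \<Rightarrow> 'a \<Rightarrow> 'a) \<Rightarrow> 'a set" where
  "Sing X phi = {x \<in> X. \<forall>t. phi t x = x}"

definition nbhd_in :: "'a::topological_space set \<Rightarrow> 'a set \<Rightarrow> 'a set \<Rightarrow> bool" where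
  "nbhd_in X K U \<longleftrightarrow> U \<subseteq> X \<and> (\<exists>V. open V \<and> K \<subseteq> V \<and> V \<inter> X \<subseteq> U)"

definition dyn_isolated :: "'a::metric_space set \<Rightarrow> (real \<Rightarrow> 'a \<Rightarrow> 'a) \<Rightarrow> 'a set \<Rightarrow> bool" where
  "dyn_isolated X phi K \<longleftrightarrow>
     K \<subseteq> X \<and> compact K \<and> (\<forall>t. phi t ` K = K) \<and>
     (\<exists>U. nbhd_in X K U \<and> K = (\<Inter>t. phi t ` U))"

end

theory Submission
  imports Defs
begin

theorem mainTheorem12:
  fixes X :: "'a::metric_space set" and phi :: "real \<Rightarrow> 'a \<Rightarrow> 'a"
  assumes "compact X" and "is_flow X phi"
    and "dyn_isolated X phi (Sing X phi)"
  shows "\<exists>\<beta>0>0. \<forall>x \<in> X - Sing X phi. diameter (orbit phi x) \<ge> \<beta>0"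
proof (rule ccontr)
  assume neg: "\<not> ?thesis"
  have cont: "continuous_on (UNIV \<times> X) (\<lambda>(t, x). phi t x)"
    and inX: "\<And>t x. x \<in> X \<Longrightarrow> phi t x \<in> X"
    and phi0: "\<And>x. x \<in> X \<Longrightarrow> phi 0 x = x"
    and phiadd: "\<And>t s x. x \<in> X \<Longrightarrow> phi (t + s) x = phi t (phi s x)"
    using assms(2) unfolding is_flow_def by auto
  obtain U V where UX: "U \<subseteq> X" and oV: "open V" and KV: "Sing X phi \<subseteq> V"
    and VU: "V \<inter> X \<subseteq> U" and KU: "Sing X phi = (\<Inter>t. phi t ` U)"
  proof -
    from assms(3) obtain U where "nbhd_in X (Sing X phi) U" "Sing X phi = (\<Inter>t. phi t ` U)"
      unfolding dyn_isolated_def by blast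
    then show ?thesis using that unfolding nbhd_in_def by blast
  qed
  have orbX: "orbit phi z \<subseteq> X" if "z \<in> X" for z
    using inX that unfolding orbit_def by auto
  have bnd: "bounded (orbit phi z)" if "z \<in> X" for z
    using orbX[OF that] compact_imp_bounded[OF assms(1)] bounded_subset by blast
  have dle: "dist (phi t z) z \<le> diameter (orbit phi z)" if "z \<in> X" for z t
  proof -
    have "phi t z \<in> orbit phi z" unfolding orbit_def by auto
    moreover have "z \<in> orbit phi z" unfolding orbit_def using phi0[OF that] by (metis (mono_tags, lifting) mem_Collect_eq)
    ultimately show ?thesis using diameter_bounded_bound[OF bnd[OF that]] by blast
  qed
  have "\<forall>n::nat. \<exists>x. x \<in> X - Sing X phi \<and> diameter (orbit phi x) < 1 / Suc n"
  proof
    fix n :: nat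
    have "(1::real) / Suc n > 0" by simp
    then show "\<exists>x. x \<in> X - Sing X phi \<and> diameter (orbit phi x) < 1 / Suc n"
    proof -
      from neg have "\<forall>b>0. \<exists>x\<in>X - Sing X phi. diameter (orbit phi x) < b" by (auto simp: not_le)
      from this[rule_format, OF \<open>(1::real) / Suc n > 0\<close>] show ?thesis by blast
    qed
  qed
  then obtain x where x: "\<And>n. x n \<in> X - Sing X phi" and xd: "\<And>n. diameter (orbit phi (x n)) < 1 / Suc n"
    by metis
  obtain l r where lX: "l \<in> X" and r: "strict_mono r" and lim: "((x \<circ> r) \<longlonglongrightarrow> l)"
    using compact_imp_seq_compact[OF assms(1)] x unfolding seq_compact_def by (metis DiffD1)
  define y where "y = x \<circ> r"
  have yX: "y n \<in> X - Sing X phi" for n using x unfolding y_def by simp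
  have ydiam: "eventually (\<lambda>n. diameter (orbit phi (y n)) < e) sequentially" if epos: "e > 0" for e
  proof -
    obtain N :: nat where N: "inverse (real (Suc N)) < e" using reals_Archimedean[OF epos] by blast
    show ?thesis unfolding eventually_sequentially
    proof (intro exI allI impI)
      fix n assume "N \<le> n"
      then have "N \<le> r n" using seq_suble[OF r] le_trans by blast
      then have "1 / real (Suc (r n)) \<le> 1 / real (Suc N)"
        by (simp add: frac_le)
      then show "diameter (orbit phi (y n)) < e" using xd[of "r n"] N unfolding y_def
        by (simp add: inverse_eq_divide)
    qed
  qed
  have ylim: "y \<longlonglongrightarrow> l" using lim unfolding y_def .
  show False
  proof (cases "l \<in> Sing X phi")
    case True
    then have "l \<in> V" using KV by blast
    then obtain e where e: "e > 0" "ball l e \<subseteq> V" using oV open_contains_ball by blast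
    have "eventually (\<lambda>n. dist (y n) l < e/2) sequentially"
      using tendstoD[OF ylim, of "e/2"] e(1) by simp
    moreover have "eventually (\<lambda>n. diameter (orbit phi (y n)) < e/2) sequentially"
      using ydiam[of "e/2"] e(1) by simp
    ultimately have "eventually (\<lambda>n. dist (y n) l < e/2 \<and> diameter (orbit phi (y n)) < e/2) sequentially"
      by (rule eventually_conj)
    then obtain N where "\<forall>n\<ge>N. dist (y n) l < e/2 \<and> diameter (orbit phi (y n)) < e/2"
      unfolding eventually_sequentially by blast
    then obtain n where n1: "dist (y n) l < e/2" and n2: "diameter (orbit phi (y n)) < e/2"
      by blast
    have yn: "y n \<in> X" using yX by blast
    have inU: "phi s (y n) \<in> U" for s
    proof -
      have "dist (phi s (y n)) (y n) < e/2" using dle[OF yn, of s] n2 by linarith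
      then have "dist l (phi s (y n)) < e" using n1 dist_triangle[of "phi s (y n)" l "y n"]
        by (simp add: dist_commute)
      then have "phi s (y n) \<in> V" using e(2) by auto
      then show ?thesis using VU inX[OF yn] by blast
    qed
    have "y n \<in> phi t ` U" for t
    proof -
      have "phi t (phi (-t) (y n)) = y n" using phiadd[OF yn, of t "-t"] phi0[OF yn] by simp
      then show ?thesis using inU[of "-t"] by (metis image_eqI)
    qed
    then have "y n \<in> Sing X phi" using KU by blast
    then show False using yX by blast
  next
    case False
    then obtain t where t: "phi t l \<noteq> l" using lX unfolding Sing_def by blast
    define d where "d = dist (phi t l) l"
    have dpos: "d > 0" using t unfolding d_def by simp
    have ct: "continuous_on X (phi t)"
    proof -
      have "continuous_on X ((\<lambda>(t, x). phi t x) \<circ> (\<lambda>x. (t, x)))"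
        by (rule continuous_on_compose, intro continuous_intros)
           (rule continuous_on_subset[OF cont], auto)
      then show ?thesis by (simp add: o_def)
    qed
    have "((\<lambda>n. phi t (y n)) \<longlongrightarrow> phi t l) sequentially"
      using continuous_on_tendsto_compose[OF ct ylim lX] yX by (simp add: o_def)
    then have "((\<lambda>n. dist (phi t (y n)) (y n)) \<longlongrightarrow> d) sequentially"
      unfolding d_def using ylim by (intro tendsto_dist)
    then have "eventually (\<lambda>n. dist (phi t (y n)) (y n) > d/2) sequentially"
      using dpos by (intro order_tendstoD) auto
    moreover have "eventually (\<lambda>n. diameter (orbit phi (y n)) < d/2) sequentially"
      using ydiam[of "d/2"] dpos by simp
    ultimately have "eventually (\<lambda>n. False) sequentially"
    proof (rule eventually_elim2)
      fix n assume "d/2 < dist (phi t (y n)) (y n)" "diameter (orbit phi (y n)) < d/2"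
      then show False using dle[of "y n" t] yX by force
    qed
    then show False by simp
  qed
qed

end
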